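(* Let $n\in\mathbb N$ and put $n_0:=n$; let $\mathbf m=(m_1,\ldots,m_p)\in\mathbb N^p$, $\boldsymbol\varepsilon=(\varepsilon_1,\ldots,\varepsilon_p)\in\{\pm1\}^p$ and $|x|<1$. Then \[ n\int_0^x t^{n-1}dt\,w_{\varepsilon_1}w_0^{m_1-1}w_{\varepsilon_2}w_0^{m_2-1}\cdots w_{\varepsilon_p}w_0^{m_p-1} =(-1)^p\sum_{n\ge n_1\ge\cdots\ge n_p\ge1}x^{n_p}\prod_{j=1}^p\frac{1+\varepsilon_j(-1)^{n_{j-1}+n_j}}{n_j^{m_j}} \] \[ +\frac12\sum_{j=1}^p(-1)^{j-1}\,\mathrm{Mi}_{m_p,\ldots,m_j}\big(-\mathbf q(\varepsilon_{j+1},\ldots,\varepsilon_p),-1;x\big)\big(1-\varepsilon_1\cdots\varepsilon_j(-1)^n\big)M^\star_n\big(m_1,\ldots,m_{j-1};-\mathbf p(\varepsilon_2,\ldots,\varepsilon_j)\big) \] \[ +\frac12\sum_{j=1}^p(-1)^{j-1}\,\mathrm{Mi}_{m_p,\ldots,m_j}\big(\mathbf q(\varepsilon_{j+1},\ldots,\varepsilon_p),1;x\big)\big(1+\varepsilon_1\cdots\varepsilon_j(-1)^n\big)M^\star_n\big(m_1,\ldots,m_{j-1};\mathbf p(\varepsilon_2,\ldots,\varepsilon_j)\big), \] where for $j=p$ the sign vector of $\mathrm{Mi}$ is just $(\mp1)$ resp. $(1)$, and for $j=1$ the $M^\star_n$ factor is $1$.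
   Context: Iterated integrals: $\int_a^b f_q\cdots f_1:=\int_{a<t_q<\cdots<t_1<b}f_q(t_q)\cdots f_1(t_1)$ (leftmost form carries the smallest variable); $w_0=dt/t$, $w_{-1}=2\,dt/(1-t^2)$, $w_1=2t\,dt/(1-t^2)$, $w_0^{0}$ means absent. For $\boldsymbol\varepsilon=(\varepsilon_1,\ldots,\varepsilon_r)\in\{\pm1\}^r$: $\mathbf p(\boldsymbol\varepsilon)=(\varepsilon_1\varepsilon_2\cdots\varepsilon_r,\varepsilon_2\cdots\varepsilon_r,\ldots,\varepsilon_{r-1}\varepsilon_r,\varepsilon_r)$, $\mathbf q(\boldsymbol\varepsilon)=(\varepsilon_1\cdots\varepsilon_r,\varepsilon_1\cdots\varepsilon_{r-1},\ldots,\varepsilon_1\varepsilon_2,\varepsilon_1)$; these are empty for empty input, and $a\boldsymbol\varepsilon=(a\varepsilon_1,\ldots,a\varepsilon_r)$. Multiple $M$-harmonic star sum: $M^\star_n(\mathbf k;\boldsymbol\varepsilon)=\sum_{n\ge n_1\ge\cdots\ge n_r\ge1}\prod_j(1+\varepsilon_j(-1)^{n_j})/n_j^{k_j}$, $M^\star_n(\emptyset;\emptyset)=1$. Multiple $M$-polylogarithm: $\mathrm{Mi}_{\mathbf k}(\boldsymbol\varepsilon;x)=\sum_{n_1>\cdots>n_r>0}x^{n_1}\prod_j(1+\varepsilon_j(-1)^{n_j})/n_j^{k_j}$. *)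

theory Defs
  imports "HOL-Analysis.Analysis"
begin

text \<open>Differential forms (as densities): w0 = dt/t, w(-1) = 2dt/(1-t^2), w1 = 2t dt/(1-t^2).\<close>
definition wform :: "int \<Rightarrow> real \<Rightarrow> real" where
  "wform e t = (if e = 0 then 1 / t else if e = -1 then 2 / (1 - t\<^sup>2) else 2 * t / (1 - t\<^sup>2))"

definition oint :: "(real \<Rightarrow> real) \<Rightarrow> real \<Rightarrow> real" where
  "oint f x = interval_lebesgue_integral lborel (ereal 0) (ereal x) f"

text \<open>itint_rev [f1, f2, ..., fq] x = integral over 0 < t_q < ... < t_1 < x of f_q(t_q)...f_1(t_1).\<close>
fun itint_rev :: "(real \<Rightarrow> real) list \<Rightarrow> real \<Rightarrow> real" where
  "itint_rev [] x = 1"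
| "itint_rev (f # gs) x = oint (\<lambda>t. f t * itint_rev gs t) x"

text \<open>Iterated integral with the paper's convention: the leftmost form carries the smallest variable.\<close>
definition itint :: "(real \<Rightarrow> real) list \<Rightarrow> real \<Rightarrow> real" where
  "itint fs x = itint_rev (rev fs) x"

definition wword :: "nat \<Rightarrow> nat list \<Rightarrow> int list \<Rightarrow> (real \<Rightarrow> real) list" where
  "wword n ms es = (\<lambda>t. t ^ (n - 1)) #
     concat (map (\<lambda>(m, e). wform e # replicate (m - 1) (wform 0)) (zip ms es))"

definition pvec :: "int list \<Rightarrow> int list" where
  "pvec es = map (\<lambda>i. prod_list (drop i es)) [0..<length es]"

definition qvec :: "int list \<Rightarrow> int list" where
  "qvec es = map (\<lambda>i. prod_list (take (length es - i) es)) [0..<length es]"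

fun Mstar :: "nat \<Rightarrow> nat list \<Rightarrow> int list \<Rightarrow> real" where
  "Mstar n [] [] = 1"
| "Mstar n (k # ks) (e # es) =
     (\<Sum>n1 = 1..n. (1 + of_int e * (-1) ^ n1) / real n1 ^ k * Mstar n1 ks es)"
| "Mstar n _ _ = 0"

fun Mstrict :: "nat \<Rightarrow> nat list \<Rightarrow> int list \<Rightarrow> real" where
  "Mstrict N [] [] = 1"
| "Mstrict N (k # ks) (e # es) =
     (\<Sum>n1 \<in> {1..<N}. (1 + of_int e * (-1) ^ n1) / real n1 ^ k * Mstrict n1 ks es)"
| "Mstrict N _ _ = 0"

fun Mi :: "nat list \<Rightarrow> int list \<Rightarrow> real \<Rightarrow> real" where
  "Mi (k # ks) (e # es) x =
     (\<Sum>N. x ^ N * ((1 + of_int e * (-1) ^ N) / real N ^ k) * Mstrict N ks es)"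
| "Mi _ _ x = 0"

fun Cchain :: "nat \<Rightarrow> nat list \<Rightarrow> int list \<Rightarrow> real \<Rightarrow> real" where
  "Cchain n [] [] x = x ^ n"
| "Cchain n (m # ms) (e # es) x =
     (\<Sum>n1 = 1..n. (1 + of_int e * (-1) ^ (n + n1)) / real n1 ^ m * Cchain n1 ms es x)"
| "Cchain n _ _ x = 0"

end

theory Submission
  imports Defs
begin


definition ps :: "(nat \<Rightarrow> real) \<Rightarrow> real \<Rightarrow> real" where
  "ps c t = (\<Sum>K. c K * t ^ K)"

definition PP :: "(nat \<Rightarrow> real) \<Rightarrow> bool" where
  "PP c \<longleftrightarrow> (\<forall>r. 0 \<le> r \<longrightarrow> r < 1 \<longrightarrow> summable (\<lambda>K. \<bar>c K\<bar> * r ^ K))"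

definition intc :: "(nat \<Rightarrow> real) \<Rightarrow> nat \<Rightarrow> real" where
  "intc c K = (if K = 0 then 0 else c (K - 1) / real K)"

lemma PP_summable: assumes "PP c" "\<bar>t\<bar> < 1" shows "summable (\<lambda>K. c K * t ^ K)"
proof -
  have "summable (\<lambda>K. \<bar>c K\<bar> * \<bar>t\<bar> ^ K)" using assms unfolding PP_def by auto
  hence "summable (\<lambda>K. norm (c K * t ^ K))" by (simp add: abs_mult power_abs)
  thus ?thesis by (rule summable_norm_cancel)
qed

lemma PP_intc: assumes "PP c" shows "PP (intc c)"
  unfolding PP_def
proof (intro allI impI)
  fix r :: real assume r: "0 \<le> r" "r < 1"
  have s: "summable (\<lambda>K. \<bar>c K\<bar> * r ^ K)" using assms r unfolding PP_def by auto
  have "summable (\<lambda>K. \<bar>intc c (Suc K)\<bar> * r ^ (Suc K))"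
  proof (rule summable_comparison_test'[OF s])
    fix K :: nat
    have "\<bar>intc c (Suc K)\<bar> * r ^ (Suc K) = (\<bar>c K\<bar> / (real K + 1) * r) * r ^ K"
      by (simp add: intc_def abs_divide algebra_simps)
    also have "\<dots> \<le> \<bar>c K\<bar> * r ^ K"
    proof (rule mult_right_mono)
      have "\<bar>c K\<bar> / (real K + 1) \<le> \<bar>c K\<bar>" by (simp add: divide_le_eq mult_le_cancel_left1)
      thus "\<bar>c K\<bar> / (real K + 1) * r \<le> \<bar>c K\<bar>" using r mult_mono[of "\<bar>c K\<bar> / (real K + 1)" "\<bar>c K\<bar>" r 1] by auto
    qed (use r in auto)
    finally show "norm (\<bar>intc c (Suc K)\<bar> * r ^ (Suc K)) \<le> \<bar>c K\<bar> * r ^ K" using r by simp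
  qed
  thus "summable (\<lambda>K. \<bar>intc c K\<bar> * r ^ K)" by (subst summable_Suc_iff[symmetric])
qed

lemma diffs_intc: "diffs (intc c) = c"
  by (rule ext) (simp add: diffs_def intc_def)

lemma ps_deriv: assumes "PP c" "\<bar>t\<bar> < 1" shows "(ps c has_real_derivative ps (diffs c) t) (at t)"
proof -
  define K where "K = (1 + \<bar>t\<bar>) / 2"
  have K: "\<bar>t\<bar> < K" "K < 1" "0 \<le> K" using assms unfolding K_def by auto
  have "summable (\<lambda>n. c n * K ^ n)" using PP_summable[OF assms(1)] K by auto
  from termdiffs_strong[OF this, of t] K show ?thesis unfolding ps_def[abs_def] by auto
qed

lemma oint_ps: assumes "PP c" "\<bar>x\<bar> < 1" shows "oint (ps c) x = ps (intc c) x"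
proof -
  have I: "PP (intc c)" by (rule PP_intc[OF assms(1)])
  have bnd: "\<bar>t\<bar> < 1" if "min 0 x \<le> t" "t \<le> max 0 x" for t using that assms by auto
  have "interval_lebesgue_integral lborel (ereal 0) (ereal x) (ps c) = ps (intc c) x - ps (intc c) 0"
  proof (rule interval_integral_FTC_finite)
    show "continuous_on {min 0 x..max 0 x} (ps c)"
      by (rule continuous_at_imp_continuous_on) (metis DERIV_isCont ps_deriv assms(1) bnd atLeastAtMost_iff)
    fix t assume "min 0 x \<le> t" "t \<le> max 0 x"
    from ps_deriv[OF I bnd[OF this]] show "(ps (intc c) has_vector_derivative ps c t) (at t within {min 0 x..max 0 x})"
      by (simp add: diffs_intc has_real_derivative_iff_has_vector_derivative[symmetric] has_field_derivative_at_within)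
  qed
  moreover have "ps (intc c) 0 = 0" unfolding ps_def by (simp add: intc_def)
  ultimately show ?thesis unfolding oint_def by (simp add: zero_ereal_def)
qed

definition divc :: "(nat \<Rightarrow> real) \<Rightarrow> nat \<Rightarrow> real" where
  "divc c K = c K / real K"

lemma PP_mono: assumes "PP c" "\<And>K. \<bar>d K\<bar> \<le> B * \<bar>c K\<bar>" shows "PP d"
  unfolding PP_def
proof (intro allI impI)
  fix r :: real assume r: "0 \<le> r" "r < 1"
  have s: "summable (\<lambda>K. B * (\<bar>c K\<bar> * r ^ K))" using assms r unfolding PP_def by (auto intro: summable_mult)
  show "summable (\<lambda>K. \<bar>d K\<bar> * r ^ K)"
  proof (rule summable_comparison_test'[OF s])
    fix K show "norm (\<bar>d K\<bar> * r ^ K) \<le> B * (\<bar>c K\<bar> * r ^ K)"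
      using mult_right_mono[OF assms(2)[of K], of "r^K"] r by (simp add: mult.assoc)
  qed
qed

lemma PP_divc: assumes "PP c" shows "PP (divc c)"
proof (rule PP_mono[OF assms, of _ 1])
  fix K show "\<bar>divc c K\<bar> \<le> 1 * \<bar>c K\<bar>"
    by (cases K) (auto simp: divc_def abs_divide divide_le_eq mult_le_cancel_left1)
qed

lemma PP_shift: assumes "PP c" shows "PP (\<lambda>K. c (Suc K))"
  unfolding PP_def
proof (intro allI impI)
  fix r :: real assume r: "0 \<le> r" "r < 1"
  define r' where "r' = (1 + r) / 2"
  have r': "0 < r'" "r' < 1" "r \<le> r'" using r unfolding r'_def by auto
  have "summable (\<lambda>K. \<bar>c K\<bar> * r' ^ K)" using assms r' unfolding PP_def by auto
  hence "summable (\<lambda>K. \<bar>c (Suc K)\<bar> * r' ^ (Suc K))" by (subst summable_Suc_iff)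
  hence s: "summable (\<lambda>K. (1 / r') * (\<bar>c (Suc K)\<bar> * r' ^ (Suc K)))" by (rule summable_mult)
  show "summable (\<lambda>K. \<bar>c (Suc K)\<bar> * r ^ K)"
  proof (rule summable_comparison_test'[OF s])
    fix K
    have "\<bar>c (Suc K)\<bar> * r ^ K \<le> \<bar>c (Suc K)\<bar> * r' ^ K"
      using r r' by (intro mult_left_mono power_mono) auto
    also have "\<dots> = (1 / r') * (\<bar>c (Suc K)\<bar> * r' ^ (Suc K))" using r' by simp
    finally show "norm (\<bar>c (Suc K)\<bar> * r ^ K) \<le> (1 / r') * (\<bar>c (Suc K)\<bar> * r' ^ (Suc K))" using r by simp
  qed
qed

lemma ps_shift: assumes "c 0 = 0" "PP c" "\<bar>s\<bar> < 1"
  shows "ps c s = s * ps (\<lambda>K. c (Suc K)) s"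
proof -
  have sm: "summable (\<lambda>K. c K * s ^ K)" by (rule PP_summable[OF assms(2,3)])
  have sm2: "summable (\<lambda>K. c (Suc K) * s ^ K)" by (rule PP_summable[OF PP_shift[OF assms(2)] assms(3)])
  have "ps c s = (\<Sum>K. c (Suc K) * s ^ (Suc K))"
    unfolding ps_def using suminf_split_head[OF sm] assms(1) by simp
  also have "\<dots> = (\<Sum>K. s * (c (Suc K) * s ^ K))" by (simp add: algebra_simps)
  also have "\<dots> = s * ps (\<lambda>K. c (Suc K)) s" unfolding ps_def by (rule suminf_mult[OF sm2])
  finally show ?thesis .
qed

lemma intc_shift: assumes "c 0 = 0" shows "intc (\<lambda>K. c (Suc K)) = divc c"
  by (rule ext) (auto simp: intc_def divc_def assms)

lemma einterval_0: assumes "t \<in> einterval (min (ereal 0) (ereal x)) (max (ereal 0) (ereal x))"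
  shows "t \<noteq> 0" "\<bar>t\<bar> < \<bar>x\<bar>"
  using assms by (auto simp: einterval_def min_def max_def split: if_splits)

lemma oint_w0: assumes "PP c" "c 0 = 0" "\<And>t. \<bar>t\<bar> < 1 \<Longrightarrow> F t = ps c t" "\<bar>x\<bar> < 1"
  shows "oint (\<lambda>s. wform 0 s * F s) x = ps (divc c) x"
proof -
  have "oint (\<lambda>s. wform 0 s * F s) x = oint (ps (\<lambda>K. c (Suc K))) x"
    unfolding oint_def
  proof (rule interval_integral_cong)
    fix t assume t: "t \<in> einterval (min (ereal 0) (ereal x)) (max (ereal 0) (ereal x))"
    have t1: "\<bar>t\<bar> < 1" using einterval_0(2)[OF t] assms(4) by auto
    show "wform 0 t * F t = ps (\<lambda>K. c (Suc K)) t"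
      using einterval_0(1)[OF t] ps_shift[OF assms(2,1) t1] assms(3)[OF t1] by (simp add: wform_def)
  qed
  also have "\<dots> = ps (divc c) x" using oint_ps[OF PP_shift[OF assms(1)] assms(4)] intc_shift[of c, OF assms(2)] by simp
  finally show ?thesis .
qed

definition dco :: "int \<Rightarrow> nat \<Rightarrow> real" where
  "dco e j = 1 - of_int e * (-1) ^ j"

definition conv :: "int \<Rightarrow> (nat \<Rightarrow> real) \<Rightarrow> nat \<Rightarrow> real" where
  "conv e c M = (\<Sum>i\<le>M. c i * dco e (M - i))"

lemma frac_l1: assumes "1 - (s::real) \<noteq> 0" "1 + s \<noteq> 0" shows "1/(1-s) + 1/(1+s) = 2/((1-s)*(1+s))"
proof -
  have "1/(1-s) + 1/(1+s) = ((1+s) + (1-s))/((1-s)*(1+s))" using add_frac_eq[OF assms, of 1 1] by (simp add: algebra_simps)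
  thus ?thesis by simp
qed

lemma frac_l2: assumes "1 - (s::real) \<noteq> 0" "1 + s \<noteq> 0" shows "1/(1-s) - 1/(1+s) = 2 * s /((1-s)*(1+s))"
proof -
  have "1/(1-s) - 1/(1+s) = ((1+s) - (1-s))/((1-s)*(1+s))" using diff_frac_eq[OF assms, of 1 1] by (simp add: algebra_simps)
  thus ?thesis by simp
qed

lemma wform_sums: assumes "e \<in> {-1, 1}" "\<bar>s\<bar> < 1"
  shows "(\<lambda>j. dco e j * s ^ j) sums wform e s"
proof -
  have g1: "(\<lambda>j. s ^ j) sums (1 / (1 - s))" using geometric_sums[of s] assms by simp
  have g2: "(\<lambda>j. (-s) ^ j) sums (1 / (1 + s))" using geometric_sums[of "-s"] assms by simp
  have "(\<lambda>j. s ^ j - of_int e * (-s) ^ j) sums (1 / (1 - s) - of_int e * (1 / (1 + s)))"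
    by (rule sums_diff[OF g1 sums_mult[OF g2]])
  moreover have "(\<lambda>j. s ^ j - of_int e * (-s) ^ j) = (\<lambda>j. dco e j * s ^ j)"
    by (rule ext) (simp add: dco_def power_minus[of s] algebra_simps)
  moreover have "1 / (1 - s) - of_int e * (1 / (1 + s)) = wform e s"
  proof -
    have a1: "1 - s \<noteq> 0" "1 + s \<noteq> 0" using assms(2) by (auto simp: abs_less_iff)
    have b: "1 - s\<^sup>2 = (1 - s) * (1 + s)" by (simp add: power2_eq_square algebra_simps)
    from assms(1) show ?thesis
    proof
      assume "e = -1"
      thus ?thesis unfolding wform_def b using frac_l1[OF a1] by simp
    next
      assume "e \<in> {1}"
      thus ?thesis unfolding wform_def b using frac_l2[OF a1] by simp
    qed
  qed
  ultimately show ?thesis by simp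
qed

lemma dco_bound: "\<bar>dco e j\<bar> \<le> 2" if "e \<in> {-1, 1}" for e j
  using that by (cases "even j") (auto simp: dco_def)

lemma PP_conv: assumes "PP c" "e \<in> {-1, 1}" shows "PP (conv e c)"
  unfolding PP_def
proof (intro allI impI)
  fix r :: real assume r: "0 \<le> r" "r < 1"
  have a: "summable (\<lambda>k. norm (\<bar>c k\<bar> * r ^ k))" using assms r unfolding PP_def by simp
  have b: "summable (\<lambda>k. norm (2 * r ^ k))" using r by (simp add: summable_geometric)
  have s: "summable (\<lambda>k. \<Sum>i\<le>k. (\<bar>c i\<bar> * r ^ i) * (2 * r ^ (k - i)))"
    by (rule summable_Cauchy_product[OF a b])
  show "summable (\<lambda>K. \<bar>conv e c K\<bar> * r ^ K)"
  proof (rule summable_comparison_test'[OF s])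
    fix k
    have "\<bar>conv e c k\<bar> * r ^ k \<le> (\<Sum>i\<le>k. \<bar>c i * dco e (k - i)\<bar>) * r ^ k"
      unfolding conv_def using r by (intro mult_right_mono sum_abs) auto
    also have "\<dots> = (\<Sum>i\<le>k. \<bar>c i\<bar> * \<bar>dco e (k - i)\<bar> * r ^ i * r ^ (k - i))"
      unfolding sum_distrib_right
    proof (rule sum.cong[OF refl])
      fix i assume "i \<in> {..k}"
      hence "r ^ i * r ^ (k - i) = r ^ k" by (simp add: power_add[symmetric])
      thus "\<bar>c i * dco e (k - i)\<bar> * r ^ k = \<bar>c i\<bar> * \<bar>dco e (k - i)\<bar> * r ^ i * r ^ (k - i)"
        by (simp add: abs_mult mult.assoc)
    qed
    also have "\<dots> \<le> (\<Sum>i\<le>k. (\<bar>c i\<bar> * r ^ i) * (2 * r ^ (k - i)))"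
    proof (rule sum_mono)
      fix i
      have "\<bar>c i\<bar> * \<bar>dco e (k - i)\<bar> * (r ^ i * r ^ (k - i)) \<le> \<bar>c i\<bar> * 2 * (r ^ i * r ^ (k - i))"
        using r dco_bound[OF assms(2)] by (intro mult_right_mono mult_left_mono) auto
      thus "\<bar>c i\<bar> * \<bar>dco e (k - i)\<bar> * r ^ i * r ^ (k - i) \<le> (\<bar>c i\<bar> * r ^ i) * (2 * r ^ (k - i))"
        by (simp add: algebra_simps)
    qed
    finally show "norm (\<bar>conv e c k\<bar> * r ^ k) \<le> (\<Sum>i\<le>k. (\<bar>c i\<bar> * r ^ i) * (2 * r ^ (k - i)))"
      using r by simp
  qed
qed

lemma ps_conv: assumes "PP c" "e \<in> {-1, 1}" "\<bar>s\<bar> < 1"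
  shows "wform e s * ps c s = ps (conv e c) s"
proof -
  have a: "summable (\<lambda>k. norm (c k * s ^ k))"
    using assms unfolding PP_def by (auto simp: abs_mult power_abs)
  have b: "summable (\<lambda>k. norm (dco e k * s ^ k))"
  proof (rule summable_comparison_test')
    show "summable (\<lambda>k. 2 * \<bar>s\<bar> ^ k)" using assms(3) by (simp add: summable_geometric)
    fix k show "norm (norm (dco e k * s ^ k)) \<le> 2 * \<bar>s\<bar> ^ k"
      using dco_bound[OF assms(2), of k] by (simp add: abs_mult power_abs mult_right_mono)
  qed
  have "(\<lambda>k. \<Sum>i\<le>k. (c i * s ^ i) * (dco e (k - i) * s ^ (k - i))) sums ((\<Sum>k. c k * s ^ k) * (\<Sum>k. dco e k * s ^ k))"
    by (rule Cauchy_product_sums[OF a b])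
  moreover have "(\<lambda>k. \<Sum>i\<le>k. (c i * s ^ i) * (dco e (k - i) * s ^ (k - i))) = (\<lambda>k. conv e c k * s ^ k)"
  proof (rule ext)
    fix k
    have "(\<Sum>i\<le>k. (c i * s ^ i) * (dco e (k - i) * s ^ (k - i))) = (\<Sum>i\<le>k. c i * dco e (k - i) * s ^ k)"
      by (rule sum.cong) (auto simp: power_add[symmetric] algebra_simps)
    thus "(\<Sum>i\<le>k. (c i * s ^ i) * (dco e (k - i) * s ^ (k - i))) = conv e c k * s ^ k"
      by (simp add: conv_def sum_distrib_right)
  qed
  ultimately have "(\<lambda>k. conv e c k * s ^ k) sums (ps c s * wform e s)"
    using sums_unique[OF wform_sums[OF assms(2,3)]] unfolding ps_def by simp
  thus ?thesis unfolding ps_def by (simp add: sums_iff mult.commute)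
qed

lemma oint_we: assumes "PP c" "e \<in> {-1, 1}" "\<And>t. \<bar>t\<bar> < 1 \<Longrightarrow> F t = ps c t" "\<bar>x\<bar> < 1"
  shows "oint (\<lambda>s. wform e s * F s) x = ps (intc (conv e c)) x"
proof -
  have "oint (\<lambda>s. wform e s * F s) x = oint (ps (conv e c)) x"
    unfolding oint_def
  proof (rule interval_integral_cong)
    fix t assume t: "t \<in> einterval (min (ereal 0) (ereal x)) (max (ereal 0) (ereal x))"
    have t1: "\<bar>t\<bar> < 1" using einterval_0(2)[OF t] assms(4) by auto
    show "wform e t * F t = ps (conv e c) t"
      using ps_conv[OF assms(1,2) t1] assms(3)[OF t1] by simp
  qed
  also have "\<dots> = ps (intc (conv e c)) x" using oint_ps[OF PP_conv[OF assms(1,2)] assms(4)] by simp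
  finally show ?thesis .
qed

fun R :: "(real \<Rightarrow> real) list \<Rightarrow> (real \<Rightarrow> real) \<Rightarrow> real \<Rightarrow> real" where
  "R [] F x = F x"
| "R (h # hs) F x = oint (\<lambda>t. h t * R hs F t) x"

lemma itint_rev_snoc: "itint_rev (hs @ [f]) x = R hs (\<lambda>t. oint (\<lambda>s. f s * 1) t) x"
  by (induction hs arbitrary: x) auto

lemma R_append: "R (A @ B) F x = R A (R B F) x"
proof (induction A arbitrary: x)
  case Nil then show ?case by simp
next
  case (Cons a A)
  have "(\<lambda>t. R (A @ B) F t) = (\<lambda>t. R A (R B F) t)" using Cons by auto
  then show ?case by simp
qed

definition step :: "int \<Rightarrow> nat \<Rightarrow> (nat \<Rightarrow> real) \<Rightarrow> nat \<Rightarrow> real" where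
  "step e m b N = (\<Sum>k<N. b k * (1 + of_int e * (-1) ^ (N + k))) / real N ^ m"

fun Cf :: "(nat \<Rightarrow> real) \<Rightarrow> nat list \<Rightarrow> int list \<Rightarrow> nat \<Rightarrow> real" where
  "Cf b (m # ms) (e # es) = Cf (step e m b) ms es"
| "Cf b _ _ = b"

lemma funpow_divc: "(divc ^^ k) d N = d N / real N ^ k"
  by (induction k) (auto simp: divc_def divide_divide_eq_left mult.commute)

lemma parity_sub: assumes "i < N" shows "(-1::real) ^ (N - 1 - i) = - ((-1) ^ (N + i))"
proof -
  have e: "N + i = (N - 1 - i) + 2 * i + 1" using assms by simp
  have "(-1::real) ^ (N + i) = (-1) ^ (N - 1 - i) * ((-1) ^ 2) ^ i * (-1)"
    unfolding e power_add power_mult by simp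
  thus ?thesis by simp
qed

lemma divc_0: "divc c 0 = 0" by (simp add: divc_def)

lemma step_eq: assumes "m \<ge> 1" shows "step e m c = (divc ^^ (m - 1)) (intc (conv e c))"
proof (rule ext)
  fix N
  show "step e m c N = (divc ^^ (m - 1)) (intc (conv e c)) N"
  proof (cases N)
    case 0 then show ?thesis by (simp add: step_def funpow_divc intc_def)
  next
    case (Suc N')
    have "conv e c N' = (\<Sum>k<N. c k * (1 + of_int e * (-1) ^ (N + k)))"
      unfolding conv_def dco_def Suc lessThan_Suc_atMost[symmetric]
    proof (rule sum.cong[OF refl])
      fix k assume "k \<in> {..<Suc N'}"
      hence "k < Suc N'" by simp
      from parity_sub[OF this] show "c k * (1 - of_int e * (- 1) ^ (N' - k)) = c k * (1 + of_int e * (- 1) ^ (Suc N' + k))"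
        by simp
    qed
    moreover have "real N ^ m = real N * real N ^ (m - 1)" using assms by (cases m) auto
    ultimately show ?thesis using Suc by (simp add: step_def funpow_divc intc_def divide_divide_eq_left)
  qed
qed

lemma R_w0s:
  assumes "PP d" "d 0 = 0" "\<And>t. \<bar>t\<bar> < 1 \<Longrightarrow> F t = ps d t"
  shows "(\<forall>t. \<bar>t\<bar> < 1 \<longrightarrow> R (replicate k (wform 0)) F t = ps ((divc ^^ k) d) t) \<and> PP ((divc ^^ k) d) \<and> (divc ^^ k) d 0 = 0"
proof (induction k)
  case 0 then show ?case using assms by simp
next
  case (Suc k)
  then have h: "PP ((divc ^^ k) d)" "(divc ^^ k) d 0 = 0" "\<And>t. \<bar>t\<bar> < 1 \<Longrightarrow> R (replicate k (wform 0)) F t = ps ((divc ^^ k) d) t"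
    by auto
  show ?case using oint_w0[OF h] PP_divc[OF h(1)] by (simp add: divc_0)
qed

lemma block:
  assumes "PP c" "e \<in> {-1, 1}" "m \<ge> 1" "\<And>t. \<bar>t\<bar> < 1 \<Longrightarrow> F t = ps c t"
  shows "(\<forall>t. \<bar>t\<bar> < 1 \<longrightarrow> R (rev (wform e # replicate (m - 1) (wform 0))) F t = ps (step e m c) t) \<and> PP (step e m c)"
proof -
  define G where "G = R [wform e] F"
  have G: "\<And>t. \<bar>t\<bar> < 1 \<Longrightarrow> G t = ps (intc (conv e c)) t"
    unfolding G_def using oint_we[OF assms(1,2,4)] by simp
  have P: "PP (intc (conv e c))" by (rule PP_intc[OF PP_conv[OF assms(1,2)]])
  have z: "intc (conv e c) 0 = 0" by (simp add: intc_def)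
  note W = R_w0s[OF P z G, of "m - 1"]
  have "R (rev (wform e # replicate (m - 1) (wform 0))) F t = R (replicate (m - 1) (wform 0)) G t" for t
    unfolding G_def by (simp add: R_append)
  thus ?thesis using W step_eq[OF assms(3), of e c] by simp
qed

definition blocks :: "nat list \<Rightarrow> int list \<Rightarrow> (real \<Rightarrow> real) list" where
  "blocks ms es = concat (map (\<lambda>(m, e). wform e # replicate (m - 1) (wform 0)) (zip ms es))"

lemma chain:
  assumes "length ms = length es" "\<forall>m \<in> set ms. m \<ge> 1" "set es \<subseteq> {-1, 1}"
  shows "PP c \<Longrightarrow> (\<And>t. \<bar>t\<bar> < 1 \<Longrightarrow> F t = ps c t) \<Longrightarrow>
     (\<forall>t. \<bar>t\<bar> < 1 \<longrightarrow> R (rev (blocks ms es)) F t = ps (Cf c ms es) t) \<and> PP (Cf c ms es)"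
  using assms
proof (induction ms es arbitrary: c F rule: list_induct2)
  case Nil then show ?case by (simp add: blocks_def)
next
  case (Cons m ms e es)
  define G where "G = R (rev (wform e # replicate (m - 1) (wform 0))) F"
  have B: "\<And>t. \<bar>t\<bar> < 1 \<Longrightarrow> G t = ps (step e m c) t" "PP (step e m c)"
    using block[OF Cons.prems(1), of e m F] Cons.prems unfolding G_def by auto
  have IH: "(\<forall>t. \<bar>t\<bar> < 1 \<longrightarrow> R (rev (blocks ms es)) G t = ps (Cf (step e m c) ms es) t) \<and> PP (Cf (step e m c) ms es)"
    by (rule Cons.IH[OF B(2) B(1)]) (use Cons.prems in auto)
  have "R (rev (blocks (m # ms) (e # es))) F t = R (rev (blocks ms es)) G t" for t
    unfolding G_def blocks_def by (simp add: R_append)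
  thus ?case using IH by simp
qed

definition dl :: "nat \<Rightarrow> nat \<Rightarrow> real" where
  "dl j K = (if K = j then 1 else 0)"

lemma ps_dl: "ps (dl j) = (\<lambda>s. s ^ j)"
proof (rule ext)
  fix s :: real
  have "(\<lambda>K. dl j K * s ^ K) = (\<lambda>K. if K = j then s ^ K else 0)" by (auto simp: dl_def)
  thus "ps (dl j) s = s ^ j" unfolding ps_def using sums_single[of j "\<lambda>K. s ^ K"] sums_unique by metis
qed

lemma PP_dl: "PP (dl j)"
  unfolding PP_def
proof (intro allI impI)
  fix r :: real
  have "(\<lambda>K. \<bar>dl j K\<bar> * r ^ K) = (\<lambda>K. if K = j then r ^ K else 0)" by (auto simp: dl_def)
  thus "summable (\<lambda>K. \<bar>dl j K\<bar> * r ^ K)" by simp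
qed

lemma step_mult: "step e m (\<lambda>K. a * b K) = (\<lambda>K. a * step e m b K)"
  by (rule ext) (simp add: step_def sum_distrib_left mult.assoc)

lemma Cf_mult: "Cf (\<lambda>K. a * b K) ms es = (\<lambda>K. a * Cf b ms es K)"
  by (induction b ms es rule: Cf.induct) (auto simp: step_mult)

lemma wword_eq: "wword n ms es = (\<lambda>t. t ^ (n - 1)) # blocks ms es"
  by (simp add: wword_def blocks_def)

lemma PP_Cf:
  assumes "length ms = length es" "\<forall>m \<in> set ms. m \<ge> 1" "set es \<subseteq> {-1, 1}" "PP c"
  shows "PP (Cf c ms es)"
  using chain[OF assms(1-3) assms(4), of "ps c"] by simp

lemma LHS_ps:
  assumes "n \<ge> 1" "length ms = length es" "\<forall>m \<in> set ms. m \<ge> 1" "set es \<subseteq> {-1, 1}" "\<bar>x\<bar> < 1"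
  shows "real n * itint (wword n ms es) x = ps (Cf (dl n) ms es) x"
proof -
  define F0 where "F0 = (\<lambda>t. oint (\<lambda>s. s ^ (n - 1) * 1) t)"
  have F0: "F0 t = ps (intc (dl (n - 1))) t" if "\<bar>t\<bar> < 1" for t
    using oint_ps[OF PP_dl that, of "n - 1"] unfolding F0_def ps_dl by simp
  have ic: "intc (dl (n - 1)) = (\<lambda>K. (1 / real n) * dl n K)"
    using assms(1) by (auto simp: intc_def dl_def fun_eq_iff)
  have "itint (wword n ms es) x = R (rev (blocks ms es)) F0 x"
    unfolding itint_def wword_eq F0_def by (simp add: itint_rev_snoc)
  also have "\<dots> = ps (Cf (intc (dl (n - 1))) ms es) x"
    using chain[OF assms(2-4) PP_intc[OF PP_dl] F0] assms(5) by auto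
  also have "\<dots> = ps (\<lambda>K. (1 / real n) * Cf (dl n) ms es K) x" unfolding ic Cf_mult ..
  also have "\<dots> = (1 / real n) * ps (Cf (dl n) ms es) x"
    unfolding ps_def using suminf_mult[OF PP_summable[OF PP_Cf[OF assms(2-4) PP_dl] assms(5)], of "1 / real n"]
    by (simp add: mult.assoc)
  finally show ?thesis using assms(1) by simp
qed

lemma step_lin: "step e m (\<lambda>K. b K - (\<Sum>i\<in>A. g i K)) = (\<lambda>N. step e m b N - (\<Sum>i\<in>A. step e m (g i) N))"
proof (rule ext)
  fix N
  have "(\<Sum>k<N. (b k - (\<Sum>i\<in>A. g i k)) * (1 + of_int e * (-1) ^ (N + k)))
     = (\<Sum>k<N. b k * (1 + of_int e * (-1) ^ (N + k))) - (\<Sum>i\<in>A. \<Sum>k<N. g i k * (1 + of_int e * (-1) ^ (N + k)))"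
    by (simp add: left_diff_distrib sum_subtractf sum_distrib_right sum.swap[of _ A])
  thus "step e m (\<lambda>K. b K - (\<Sum>i\<in>A. g i K)) N = step e m b N - (\<Sum>i\<in>A. step e m (g i) N)"
    unfolding step_def by (simp add: diff_divide_distrib sum_divide_distrib)
qed

lemma Cf_lin: "Cf (\<lambda>K. b K - (\<Sum>i\<in>A. g i K)) ms es = (\<lambda>K. Cf b ms es K - (\<Sum>i\<in>A. Cf (g i) ms es K))"
proof (induction ms arbitrary: es b g)
  case Nil then show ?case by simp
next
  case (Cons m ms)
  show ?case
  proof (cases es)
    case Nil then show ?thesis by simp
  next
    case (Cons e es')
    show ?thesis unfolding Cons Cf.simps step_lin by (rule Cons.IH)
  qed
qed

lemma Cf_snoc: "length ms = length es \<Longrightarrow> Cf b (ms @ [m]) (es @ [e]) = step e m (Cf b ms es)"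
  by (induction ms es arbitrary: b rule: list_induct2) auto

definition EE :: "int \<Rightarrow> nat \<Rightarrow> nat \<Rightarrow> real" where
  "EE s m N = (1 + of_int s * (-1) ^ N) / real N ^ m"

lemma EE_0: "m \<ge> 1 \<Longrightarrow> EE s m 0 = 0"
  by (simp add: EE_def)

lemma step_dl: assumes "m \<ge> 1"
  shows "step e m (dl n) = (\<lambda>K. EE (e * (-1) ^ n) m K - (\<Sum>N\<in>{1..n}. EE (e * (-1) ^ n) m N * dl N K))"
proof (rule ext)
  fix K
  have s1: "(\<Sum>k<K. dl n k * (1 + of_int e * (-1) ^ (K + k))) = (if n < K then 1 + of_int e * (-1) ^ (K + n) else 0)"
    by (simp add: dl_def if_distrib[of "\<lambda>z. z * _"] sum.delta' cong: if_cong)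
  have s2: "(\<Sum>N\<in>{1..n}. EE (e * (-1) ^ n) m N * dl N K) = (if K \<in> {1..n} then EE (e * (-1) ^ n) m K else 0)"
    by (simp add: dl_def if_distrib[of "\<lambda>z. _ * z"] sum.delta cong: if_cong)
  have s3: "EE (e * (-1) ^ n) m K = (1 + of_int e * (-1) ^ (K + n)) / real K ^ m"
    by (simp add: EE_def power_add mult_ac)
  show "step e m (dl n) K = EE (e * (-1) ^ n) m K - (\<Sum>N\<in>{1..n}. EE (e * (-1) ^ n) m N * dl N K)"
    unfolding step_def s1 s2 using EE_0[OF assms] s3 by (cases "K = 0") auto
qed

lemma sign_prod: "set l \<subseteq> {-1, 1::int} \<Longrightarrow> prod_list l \<in> {-1, 1}"
  by (induction l) auto

lemma par_id: assumes "(s::int) \<in> {-1, 1}"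
  shows "(1 + a * (-1::real) ^ N) * (1 + of_int s * (-1) ^ N) = (1 + a * of_int s) * (1 + of_int s * (-1) ^ N)"
  using assms by (cases "even N") (auto simp: algebra_simps)

fun mic :: "nat list \<Rightarrow> int list \<Rightarrow> nat \<Rightarrow> real" where
  "mic (k # ks) (s # ss) N = (1 + of_int s * (-1) ^ N) / real N ^ k * Mstrict N ks ss"
| "mic _ _ N = 0"

lemma Mi_mic: "Mi (k # ks) (s # ss) x = ps (mic (k # ks) (s # ss)) x"
  unfolding ps_def by (simp add: mult_ac)

lemma qvec_snoc: "qvec (es @ [e]) = prod_list (es @ [e]) # qvec es"
proof -
  have "[0..<Suc (length es)] = 0 # map Suc [0..<length es]" by (metis map_Suc_upt upt_conv_Cons zero_less_Suc)
  moreover have "map (\<lambda>i. prod_list (take (Suc (length es) - Suc i) (es @ [e]))) [0..<length es]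
      = map (\<lambda>i. prod_list (take (length es - i) es)) [0..<length es]"
    by (rule map_cong) auto
  ultimately show ?thesis unfolding qvec_def by simp
qed

lemma qvec_Nil[simp]: "qvec [] = []" by (simp add: qvec_def)
lemma pvec_Nil[simp]: "pvec [] = []" by (simp add: pvec_def)

lemma pvec_Cons: "pvec (a # l) = prod_list (a # l) # pvec l"
proof -
  have "[0..<Suc (length l)] = 0 # map Suc [0..<length l]" by (metis map_Suc_upt upt_conv_Cons zero_less_Suc)
  thus ?thesis unfolding pvec_def by simp
qed

lemma hd_qvec: "hd (map ((*) s) (qvec es) @ [s]) = s * prod_list es"
proof (cases es rule: rev_exhaust)
  case Nil then show ?thesis by simp
next
  case (snoc ys y) then show ?thesis by (simp add: qvec_snoc)
qed

lemma set_qvec: "set es \<subseteq> {-1, 1} \<Longrightarrow> set (qvec es) \<subseteq> {-1, 1}"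
  by (auto simp: qvec_def intro!: sign_prod dest: in_set_takeD)

lemma mic_0: "k \<ge> 1 \<Longrightarrow> mic (k # ks) S 0 = 0"
  by (cases S) auto

lemma sum_drop0: fixes K :: nat assumes "f 0 = 0" shows "(\<Sum>k<K. f k) = (\<Sum>k\<in>{1..<K}. f k)"
proof (cases "K = 0")
  case True
  have "{..<K} = {}" "{1..<K} = {}" using True by auto
  then show ?thesis by simp
next
  case False
  have "(\<Sum>k<K. f k) = (\<Sum>k\<in>{0..<K}. f k)" by (simp add: atLeast0LessThan)
  also have "\<dots> = f 0 + (\<Sum>k\<in>{Suc 0..<K}. f k)" using False by (subst sum.atLeast_Suc_lessThan) auto
  finally show ?thesis using assms by simp
qed

lemma sign_mult: "(a::int) \<in> {-1, 1} \<Longrightarrow> b \<in> {-1, 1} \<Longrightarrow> a * b \<in> {-1, 1}"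
  by auto

lemma lemA:
  assumes sg: "sg \<in> {-1, 1}" and m: "m \<ge> 1"
  shows "length es = length ms \<Longrightarrow> \<forall>k\<in>set ms. k \<ge> 1 \<Longrightarrow> set es \<subseteq> {-1, 1} \<Longrightarrow>
    Cf (EE sg m) ms es = mic (rev ms @ [m]) (map ((*) sg) (qvec es) @ [sg])"
proof (induction ms arbitrary: es rule: rev_induct)
  case Nil
  then show ?case by (auto simp: fun_eq_iff EE_def)
next
  case (snoc m' ms)
  obtain es0 e' where es: "es = es0 @ [e']" using snoc.prems(1) by (cases es rule: rev_exhaust) auto
  have len: "length es0 = length ms" using snoc.prems(1) es by simp
  have e': "e' \<in> {-1, 1}" and es0s: "set es0 \<subseteq> {-1, 1}" using snoc.prems(3) es by auto
  have IH: "Cf (EE sg m) ms es0 = mic (rev ms @ [m]) (map ((*) sg) (qvec es0) @ [sg])"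
    using snoc.IH[OF len] snoc.prems(2) es0s by auto
  obtain k1 ks where L: "rev ms @ [m] = k1 # ks" by (cases "rev ms") auto
  have k1: "k1 \<ge> 1"
  proof -
    have "k1 \<in> set (rev ms @ [m])" unfolding L by simp
    thus ?thesis using snoc.prems(2) m by auto
  qed
  define s1 where "s1 = sg * prod_list es0"
  obtain ss where S: "map ((*) sg) (qvec es0) @ [sg] = s1 # ss"
    using hd_qvec[of sg es0] unfolding s1_def by (cases "map ((*) sg) (qvec es0) @ [sg]") auto
  have s1: "s1 \<in> {-1, 1}" unfolding s1_def by (rule sign_mult[OF sg sign_prod[OF es0s]])
  have lhs: "Cf (EE sg m) (ms @ [m']) es = step e' m' (mic (k1 # ks) (s1 # ss))"
    unfolding es Cf_snoc[OF len[symmetric]] IH L S ..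
  have rhs: "mic (rev (ms @ [m']) @ [m]) (map ((*) sg) (qvec es) @ [sg]) = mic (m' # k1 # ks) ((s1 * e') # s1 # ss)"
    using L S unfolding es qvec_snoc by (simp add: s1_def mult_ac)
  show ?case
    unfolding lhs rhs
  proof (rule ext)
    fix K
    have "(\<Sum>k<K. mic (k1 # ks) (s1 # ss) k * (1 + of_int e' * (-1) ^ (K + k)))
        = (\<Sum>k\<in>{1..<K}. mic (k1 # ks) (s1 # ss) k * (1 + of_int e' * (-1) ^ (K + k)))"
      by (rule sum_drop0) (use k1 in simp)
    also have "\<dots> = (\<Sum>k\<in>{1..<K}. (1 + of_int (s1 * e') * (-1) ^ K) * ((1 + of_int s1 * (-1) ^ k) / real k ^ k1 * Mstrict k ks ss))"
    proof (rule sum.cong[OF refl])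
      fix k
      have "(1 + (of_int e' * (-1) ^ K) * (-1::real) ^ k) * (1 + of_int s1 * (-1) ^ k) = (1 + (of_int e' * (-1) ^ K) * of_int s1) * (1 + of_int s1 * (-1) ^ k)"
        by (rule par_id[OF s1])
      thus "mic (k1 # ks) (s1 # ss) k * (1 + of_int e' * (-1) ^ (K + k)) = (1 + of_int (s1 * e') * (-1) ^ K) * ((1 + of_int s1 * (-1) ^ k) / real k ^ k1 * Mstrict k ks ss)"
        by (simp add: power_add mult_ac)
    qed
    also have "\<dots> = (1 + of_int (s1 * e') * (-1) ^ K) * Mstrict K (k1 # ks) (s1 # ss)"
      by (simp add: sum_distrib_left)
    finally show "step e' m' (mic (k1 # ks) (s1 # ss)) K = mic (m' # k1 # ks) (s1 * e' # s1 # ss) K"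
      unfolding step_def by simp
  qed
qed

lemma aux_div: assumes "b * c = d * (c::real)" shows "b / q * (a * (c * mm)) = a * (d * (c / q * mm))"
proof -
  have "b / q * (a * (c * mm)) = (b * c) * (a * mm) / q" by (simp add: mult_ac)
  also have "\<dots> = (d * c) * (a * mm) / q" using assms by simp
  also have "\<dots> = a * (d * (c / q * mm))" by (simp add: mult_ac)
  finally show ?thesis .
qed

definition Tg :: "real \<Rightarrow> int \<Rightarrow> nat \<Rightarrow> nat list \<Rightarrow> int list \<Rightarrow> nat \<Rightarrow> real" where
  "Tg x g n ms es j = (-1) ^ (j - 1)
        * Mi (rev (drop (j - 1) ms)) (map ((*) g) (qvec (drop j es)) @ [g]) x
        * (1 + of_int g * of_int (prod_list (take j es)) * (-1) ^ n)
        * Mstar n (take (j - 1) ms) (map ((*) g) (pvec (drop 1 (take j es))))"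

definition RH :: "real \<Rightarrow> nat \<Rightarrow> nat list \<Rightarrow> int list \<Rightarrow> real" where
  "RH x n ms es = (-1) ^ length ms * Cchain n ms es x
     + 1/2 * (\<Sum>j = 1..length ms. Tg x (-1) n ms es j)
     + 1/2 * (\<Sum>j = 1..length ms. Tg x 1 n ms es j)"

lemma TT:
  assumes g: "g \<in> {-1, 1}" and es: "set es \<subseteq> {-1, 1}" and j: "1 \<le> j" "j \<le> length es"
  shows "(\<Sum>N\<in>{1..n}. EE (e * (-1) ^ n) m N * Tg x g N ms es j) = - Tg x g n (m # ms) (e # es) (Suc j)"
proof -
  define sg where "sg = e * (-1) ^ n"
  obtain j' where j': "j = Suc j'" using j by (cases j) auto
  obtain a l where tk: "take j es = a # l" using j by (cases es) (auto simp: j')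
  define pi where "pi = prod_list (take j es)"
  define s where "s = g * pi"
  have pis: "pi \<in> {-1, 1}" unfolding pi_def by (rule sign_prod) (use es in \<open>auto dest: in_set_takeD\<close>)
  have s: "s \<in> {-1, 1}" unfolding s_def by (rule sign_mult[OF g pis])
  define A where "A = (-1) ^ (j - 1) * Mi (rev (drop (j - 1) ms)) (map ((*) g) (qvec (drop j es)) @ [g]) x"
  define ks where "ks = take (j - 1) ms"
  define ss where "ss = map ((*) g) (pvec l)"
  have T: "Tg x g N ms es j = A * ((1 + of_int s * (-1) ^ N) * Mstar N ks ss)" for N
    unfolding Tg_def A_def ks_def ss_def s_def pi_def tk by (simp add: mult_ac)
  have pa: "prod_list (a # l) = pi" unfolding pi_def tk ..
  have T': "Tg x g n (m # ms) (e # es) (Suc j) = - (A * ((1 + of_int sg * of_int s) * Mstar n (m # ks) (s # ss)))"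
  proof -
    have "Tg x g n (m # ms) (e # es) (Suc j) = (-1) ^ j * Mi (rev (drop (j - 1) ms)) (map ((*) g) (qvec (drop j es)) @ [g]) x
        * (1 + of_int g * of_int (e * pi) * (-1) ^ n) * Mstar n (m # ks) (map ((*) g) (pvec (a # l)))"
      unfolding Tg_def ks_def using tk by (simp add: j' pi_def)
    also have "map ((*) g) (pvec (a # l)) = s # ss" unfolding pvec_Cons pa s_def ss_def by simp
    also have "(-1::real) ^ j = - ((-1) ^ (j - 1))" using j' by simp
    also have "of_int g * of_int (e * pi) * (-1::real) ^ n = of_int sg * of_int s"
      by (simp add: sg_def s_def mult_ac)
    finally show ?thesis unfolding A_def by (simp del: Mstar.simps add: mult.assoc)
  qed
  have "(\<Sum>N\<in>{1..n}. EE sg m N * Tg x g N ms es j)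
      = A * ((1 + of_int sg * of_int s) * (\<Sum>N\<in>{1..n}. (1 + of_int s * (-1) ^ N) / real N ^ m * Mstar N ks ss))"
    unfolding T sum_distrib_left
  proof (rule sum.cong[OF refl])
    fix N
    have "(1 + of_int sg * (-1::real) ^ N) * (1 + of_int s * (-1) ^ N) = (1 + of_int sg * of_int s) * (1 + of_int s * (-1) ^ N)"
      by (rule par_id[OF s])
    thus "EE sg m N * (A * ((1 + of_int s * (-1) ^ N) * Mstar N ks ss)) = A * ((1 + of_int sg * of_int s) * ((1 + of_int s * (-1) ^ N) / real N ^ m * Mstar N ks ss))"
      unfolding EE_def by (rule aux_div)
  qed
  also have "\<dots> = - Tg x g n (m # ms) (e # es) (Suc j)" unfolding T' by simp
  finally show ?thesis unfolding sg_def .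
qed

lemma PP_one: "PP (\<lambda>K. 1)"
  unfolding PP_def by (auto simp: summable_geometric)

lemma EE_bound: assumes "sg \<in> {-1, 1}" shows "\<bar>EE sg m K\<bar> \<le> 2 * \<bar>1\<bar>"
proof -
  have a: "\<bar>1 + of_int sg * (-1::real) ^ K\<bar> \<le> 2" using assms by (cases "even K") auto
  have q: "real K ^ m = 0 \<or> real K ^ m \<ge> 1"
    by (cases "K = 0"; cases "m = 0") (auto intro: one_le_power)
  have "\<bar>EE sg m K\<bar> \<le> \<bar>1 + of_int sg * (-1::real) ^ K\<bar>"
    using q unfolding EE_def abs_divide by (auto simp: divide_le_eq mult_le_cancel_left1)
  with a show ?thesis by simp
qed

lemma PP_EE: "sg \<in> {-1, 1} \<Longrightarrow> PP (EE sg m)"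
  by (rule PP_mono[OF PP_one EE_bound])

lemma ps_sums: "PP c \<Longrightarrow> \<bar>x\<bar> < 1 \<Longrightarrow> (\<lambda>K. c K * x ^ K) sums ps c x"
  unfolding ps_def by (rule summable_sums[OF PP_summable])

lemma sum_split1: "(\<Sum>j = 1..Suc p. f j) = f 1 + (\<Sum>j = 1..p. f (Suc j))"
proof -
  have "(\<Sum>j = 1..Suc p. f j) = f 1 + (\<Sum>j = Suc 1..Suc p. f j)" by (rule sum.atLeast_Suc_atMost) simp
  also have "(\<Sum>j = Suc 1..Suc p. f j) = (\<Sum>j = 1..p. f (Suc j))" by (rule sum.shift_bounds_cl_Suc_ivl)
  finally show ?thesis .
qed

lemma LB:
  assumes "length ms = length es" "\<forall>m \<in> set ms. m \<ge> 1" "set es \<subseteq> {-1, 1}" "\<bar>x\<bar> < 1"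
  shows "n \<ge> 1 \<Longrightarrow> ps (Cf (dl n) ms es) x = RH x n ms es"
  using assms
proof (induction ms es arbitrary: n rule: list_induct2)
  case Nil then show ?case by (simp add: RH_def ps_dl)
next
  case (Cons m ms e es)
  define sg where "sg = e * (-1) ^ n"
  have e: "e \<in> {-1, 1}" using Cons.prems by auto
  have sgs: "sg \<in> {-1, 1}" unfolding sg_def using e by (cases "even n") auto
  have m: "m \<ge> 1" using Cons.prems by auto
  have ms1: "\<forall>m \<in> set ms. m \<ge> 1" and es1: "set es \<subseteq> {-1, 1}" using Cons.prems by auto
  let ?p = "length ms"
  have C1: "Cf (dl n) (m # ms) (e # es) = (\<lambda>K. Cf (EE sg m) ms es K - (\<Sum>N\<in>{1..n}. EE sg m N * Cf (dl N) ms es K))"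
    using Cf_lin[where b="EE sg m" and A="{1..n}" and g="\<lambda>N K. EE sg m N * dl N K" and ms=ms and es=es]
    by (simp add: step_dl[OF m] sg_def Cf_mult)
  have PPE: "PP (Cf (EE sg m) ms es)" by (rule PP_Cf[OF Cons.hyps ms1 es1 PP_EE[OF sgs]])
  have PPd: "PP (Cf (dl N) ms es)" for N by (rule PP_Cf[OF Cons.hyps ms1 es1 PP_dl])
  have s1: "(\<lambda>K. Cf (EE sg m) ms es K * x ^ K) sums ps (Cf (EE sg m) ms es) x"
    by (rule ps_sums[OF PPE Cons.prems(4)])
  have s2: "(\<lambda>K. \<Sum>N\<in>{1..n}. EE sg m N * (Cf (dl N) ms es K * x ^ K)) sums (\<Sum>N\<in>{1..n}. EE sg m N * ps (Cf (dl N) ms es) x)"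
    by (rule sums_sum, rule sums_mult, rule ps_sums[OF PPd Cons.prems(4)])
  have "(\<lambda>K. Cf (dl n) (m # ms) (e # es) K * x ^ K) sums (ps (Cf (EE sg m) ms es) x - (\<Sum>N\<in>{1..n}. EE sg m N * ps (Cf (dl N) ms es) x))"
    using sums_diff[OF s1 s2] unfolding C1 by (simp add: left_diff_distrib sum_distrib_right mult.assoc)
  hence L1: "ps (Cf (dl n) (m # ms) (e # es)) x = ps (Cf (EE sg m) ms es) x - (\<Sum>N\<in>{1..n}. EE sg m N * ps (Cf (dl N) ms es) x)"
    unfolding ps_def by (simp add: sums_iff)
  obtain k ks where kk: "rev ms @ [m] = k # ks" by (cases "rev ms") auto
  obtain s ss where sss: "map ((*) sg) (qvec es) @ [sg] = s # ss" by (cases "map ((*) sg) (qvec es) @ [sg]") auto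
  have MiE: "ps (Cf (EE sg m) ms es) x = Mi (rev ms @ [m]) (map ((*) sg) (qvec es) @ [sg]) x"
    using lemA[OF sgs m Cons.hyps[symmetric] ms1 es1] unfolding kk sss Mi_mic by simp
  have IH: "ps (Cf (dl N) ms es) x = RH x N ms es" if "N \<in> {1..n}" for N
    using Cons.IH[of N] that ms1 es1 Cons.prems(4) by auto
  have L2: "ps (Cf (dl n) (m # ms) (e # es)) x = Mi (rev ms @ [m]) (map ((*) sg) (qvec es) @ [sg]) x - (\<Sum>N\<in>{1..n}. EE sg m N * RH x N ms es)"
    unfolding L1 MiE using IH by simp
  define SS where "SS g = (\<Sum>j = 1..?p. \<Sum>N\<in>{1..n}. EE sg m N * Tg x g N ms es j)" for g
  have expd: "(\<Sum>N\<in>{1..n}. EE sg m N * RH x N ms es) = (-1) ^ ?p * (\<Sum>N\<in>{1..n}. EE sg m N * Cchain N ms es x) + 1/2 * SS (-1) + 1/2 * SS 1"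
  proof -
    have "(\<Sum>N\<in>{1..n}. EE sg m N * RH x N ms es) = (\<Sum>N\<in>{1..n}. (-1) ^ ?p * (EE sg m N * Cchain N ms es x)
        + 1/2 * (\<Sum>j = 1..?p. EE sg m N * Tg x (-1) N ms es j) + 1/2 * (\<Sum>j = 1..?p. EE sg m N * Tg x 1 N ms es j))"
      unfolding RH_def by (rule sum.cong[OF refl]) (simp add: algebra_simps sum_distrib_left)
    also have "\<dots> = (-1) ^ ?p * (\<Sum>N\<in>{1..n}. EE sg m N * Cchain N ms es x)
        + 1/2 * (\<Sum>N\<in>{1..n}. \<Sum>j = 1..?p. EE sg m N * Tg x (-1) N ms es j) + 1/2 * (\<Sum>N\<in>{1..n}. \<Sum>j = 1..?p. EE sg m N * Tg x 1 N ms es j)"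
      by (simp add: sum.distrib sum_distrib_left)
    also have "\<dots> = (-1) ^ ?p * (\<Sum>N\<in>{1..n}. EE sg m N * Cchain N ms es x) + 1/2 * SS (-1) + 1/2 * SS 1"
      unfolding SS_def
      using sum.swap[where g="\<lambda>N j. EE sg m N * Tg x (-1) N ms es j" and A="{1..n}" and B="{1..?p}"]
        sum.swap[where g="\<lambda>N j. EE sg m N * Tg x 1 N ms es j" and A="{1..n}" and B="{1..?p}"]
      by simp
    finally show ?thesis .
  qed
  have CC: "(\<Sum>N\<in>{1..n}. EE sg m N * Cchain N ms es x) = Cchain n (m # ms) (e # es) x"
    by (simp add: EE_def sg_def power_add mult_ac)
  have TTs: "SS g = - (\<Sum>j = 1..?p. Tg x g n (m # ms) (e # es) (Suc j))" if g: "g \<in> {-1, 1}" for g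
    unfolding SS_def sum_negf[symmetric]
  proof (rule sum.cong[OF refl])
    fix j assume "j \<in> {1..?p}"
    hence "1 \<le> j" "j \<le> length es" using Cons.hyps by auto
    from TT[OF g es1 this, where n=n and m=m and x=x and ms=ms and e=e] show "(\<Sum>N\<in>{1..n}. EE sg m N * Tg x g N ms es j) = - Tg x g n (m # ms) (e # es) (Suc j)"
      unfolding sg_def .
  qed
  have T1: "Tg x g n (m # ms) (e # es) 1 = Mi (rev ms @ [m]) (map ((*) g) (qvec es) @ [g]) x * (1 + of_int g * of_int sg)" for g
    by (simp add: Tg_def sg_def pvec_def mult_ac)
  have Msg: "Mi (rev ms @ [m]) (map ((*) sg) (qvec es) @ [sg]) x = 1/2 * Tg x (-1) n (m # ms) (e # es) 1 + 1/2 * Tg x 1 n (m # ms) (e # es) 1"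
    unfolding T1 using sgs by auto
  have R: "RH x n (m # ms) (e # es) = (-1) ^ Suc ?p * Cchain n (m # ms) (e # es) x
       + 1/2 * (Tg x (-1) n (m # ms) (e # es) 1 + (\<Sum>j = 1..?p. Tg x (-1) n (m # ms) (e # es) (Suc j)))
       + 1/2 * (Tg x 1 n (m # ms) (e # es) 1 + (\<Sum>j = 1..?p. Tg x 1 n (m # ms) (e # es) (Suc j)))"
    unfolding RH_def by (simp only: length_Cons sum_split1)
  show ?case unfolding L2 expd CC R Msg TTs[of "-1", simplified] TTs[of 1, simplified] by (simp add: algebra_simps)
qed


theorem mainTheorem9:
  fixes n :: nat and ms :: "nat list" and es :: "int list" and x :: real
  assumes "n \<ge> 1"
    and "\<forall>m \<in> set ms. m \<ge> 1"
    and "length es = length ms"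
    and "set es \<subseteq> {-1, 1}"
    and "\<bar>x\<bar> < 1"
  shows "real n * itint (wword n ms es) x =
      (-1) ^ length ms * Cchain n ms es x
    + 1/2 * (\<Sum>j = 1..length ms. (-1) ^ (j - 1)
        * Mi (rev (drop (j - 1) ms)) (map uminus (qvec (drop j es)) @ [-1]) x
        * (1 - of_int (prod_list (take j es)) * (-1) ^ n)
        * Mstar n (take (j - 1) ms) (map uminus (pvec (drop 1 (take j es)))))
    + 1/2 * (\<Sum>j = 1..length ms. (-1) ^ (j - 1)
        * Mi (rev (drop (j - 1) ms)) (qvec (drop j es) @ [1]) x
        * (1 + of_int (prod_list (take j es)) * (-1) ^ n)
        * Mstar n (take (j - 1) ms) (pvec (drop 1 (take j es))))"
proof -
  have neg: "((*) (-1::int)) = uminus" by auto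
  have one: "((*) (1::int)) = id" by auto
  have "real n * itint (wword n ms es) x = RH x n ms es"
    using LHS_ps[OF assms(1) assms(3)[symmetric] assms(2) assms(4) assms(5)]
      LB[OF assms(3)[symmetric] assms(2) assms(4) assms(5) assms(1)] by simp
  thus ?thesis unfolding RH_def Tg_def neg one by simp
qed

end
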